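(* For every vertex $\mathbf{x}$ of $P^n_{\mathrm{SEP}}$, the optimal values of the linear programs $\mathcal{D}\mathrm{OPT}^{\mathrm{I}}(\mathbf{x})$ and $\mathcal{D}\mathrm{OPT}^{\mathrm{II}}(\mathbf{x})$ coincide.
   Context: $K_n=(V_n,E_n)$ is the complete undirected graph on $n$ nodes; $\delta(S)$ is the set of edges with exactly one endpoint in $S$. $P^n_{\mathrm{SEP}}=\{\mathbf{x}\in\mathbb{R}^{E_n} : \sum_{e\in\delta(v)}x_e=2\ \forall v;\ \sum_{e\in\delta(S)}x_e\ge 2\ \forall S \text{ with } 3\le|S|\le n-3;\ 0\le x_e\le 1\}$; a vertex is an extreme point. The support graph of $\mathbf{x}$ is $G_{\mathbf{x}}=(V_n,E_{\mathbf{x}})$ with $E_{\mathbf{x}}=\{e:x_e>0\}$. A walk on a graph $G$ is a closed walk visiting every node at least once, identified with its characteristic vector $\mathbf{w}$ ($w_{ij}$ = number of traversals of edge $ij$); only walks with $w_{ij}\in\{0,1,2\}$ for all edges are considered. Edges are unordered, so $\lambda_{ijk}$ and $\lambda_{jik}$ denote the same variable (but $\lambda_{ijk}\ne\lambda_{kji}$). $\mathcal{D}\mathrm{OPT}^{\mathrm{I}}(\mathbf{x})$: maximize $\sum_{\mathbf{w}\text{ walk on }K_n}\mu_{\mathbf{w}}$ subject to $\sum_{k\ne i,j}(-\lambda_{ijk}+\lambda_{ikj}+\lambda_{jki})+\sum_{\mathbf{w}}w_{ij}\mu_{\mathbf{w}}\le x_{ij}$ for all $ij\in E_n$, $\lambda_{ijk}\ge0$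 for all $ij\in E_n$, $k\in V_n\setminus\{i,j\}$, $\mu_{\mathbf{w}}\ge0$. $\mathcal{D}\mathrm{OPT}^{\mathrm{II}}(\mathbf{x})$: maximize $\sum_{\mathbf{w}\text{ walk on }G_{\mathbf{x}}}\mu_{\mathbf{w}}$ subject to $\sum_{\mathbf{w}\text{ walk on }G_{\mathbf{x}}}w_{ij}\mu_{\mathbf{w}}\le x_{ij}$ for all $ij\in E_{\mathbf{x}}$, $\mu_{\mathbf{w}}\ge0$. *)

theory Defs
  imports "HOL-Analysis.Analysis"
begin

text \<open>Nodes of K_n are 0,...,n-1; an (undirected) edge is a two-element set {i,j}.
  Vectors in R^{E_n} are functions on edges, required to vanish off E_n.\<close>

definition Vn :: "nat \<Rightarrow> nat set" where
  "Vn n = {..<n}"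

definition En :: "nat \<Rightarrow> nat set set" where
  "En n = {{i, j} | i j. i < n \<and> j < n \<and> i \<noteq> j}"

definition delta :: "nat \<Rightarrow> nat set \<Rightarrow> nat set set" where
  "delta n S = {e \<in> En n. card (e \<inter> S) = 1}"

definition P_SEP :: "nat \<Rightarrow> (nat set \<Rightarrow> real) set" where
  "P_SEP n = {x. (\<forall>e. e \<notin> En n \<longrightarrow> x e = 0)
      \<and> (\<forall>v \<in> Vn n. (\<Sum>e \<in> delta n {v}. x e) = 2)
      \<and> (\<forall>S. S \<subseteq> Vn n \<and> 3 \<le> card S \<and> card S + 3 \<le> n \<longrightarrow> (\<Sum>e \<in> delta n S. x e) \<ge> 2)
      \<and> (\<forall>e \<in> En n. 0 \<le> x e \<and> x e \<le> 1)}"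

definition is_vertex :: "(nat set \<Rightarrow> real) \<Rightarrow> (nat set \<Rightarrow> real) set \<Rightarrow> bool" where
  "is_vertex x P \<longleftrightarrow> x \<in> P \<and>
     \<not> (\<exists>y \<in> P. \<exists>z \<in> P. \<exists>u::real. y \<noteq> z \<and> 0 < u \<and> u < 1 \<and> x = (\<lambda>e. u * y e + (1 - u) * z e))"

definition support_edges :: "nat \<Rightarrow> (nat set \<Rightarrow> real) \<Rightarrow> nat set set" where
  "support_edges n x = {e \<in> En n. x e > 0}"

definition closed_covering_walk :: "nat set \<Rightarrow> nat set set \<Rightarrow> nat list \<Rightarrow> bool" where
  "closed_covering_walk V E vs \<longleftrightarrow> vs \<noteq> [] \<and> hd vs = last vs \<and> set vs = V \<and>
     (\<forall>i. Suc i < length vs \<longrightarrow> {vs ! i, vs ! Suc i} \<in> E \<and> vs ! i \<noteq> vs ! Suc i)"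

definition walk_vector :: "nat list \<Rightarrow> nat set \<Rightarrow> nat" where
  "walk_vector vs e = card {i. Suc i < length vs \<and> {vs ! i, vs ! Suc i} = e}"

definition walks :: "nat set \<Rightarrow> nat set set \<Rightarrow> (nat set \<Rightarrow> nat) set" where
  "walks V E = {w. (\<exists>vs. closed_covering_walk V E vs \<and> w = walk_vector vs) \<and> (\<forall>e. w e \<le> 2)}"

definition DOPT_I_feasible :: "nat \<Rightarrow> (nat set \<Rightarrow> real) \<Rightarrow>
    ((nat set \<Rightarrow> nat \<Rightarrow> real) \<times> ((nat set \<Rightarrow> nat) \<Rightarrow> real)) set" where
  "DOPT_I_feasible n x = {(lam, mu).
     (\<forall>i j. i < n \<and> j < n \<and> i \<noteq> j \<longrightarrow>
        (\<Sum>k \<in> Vn n - {i, j}. - lam {i, j} k + lam {i, k} j + lam {j, k} i)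
        + (\<Sum>w \<in> walks (Vn n) (En n). real (w {i, j}) * mu w) \<le> x {i, j})
     \<and> (\<forall>e \<in> En n. \<forall>k \<in> Vn n - e. lam e k \<ge> 0)
     \<and> (\<forall>w \<in> walks (Vn n) (En n). mu w \<ge> 0)}"

definition DOPT_I :: "nat \<Rightarrow> (nat set \<Rightarrow> real) \<Rightarrow> ereal" where
  "DOPT_I n x = Sup ((\<lambda>(lam, mu). ereal (\<Sum>w \<in> walks (Vn n) (En n). mu w)) ` DOPT_I_feasible n x)"

definition DOPT_II_feasible :: "nat \<Rightarrow> (nat set \<Rightarrow> real) \<Rightarrow> ((nat set \<Rightarrow> nat) \<Rightarrow> real) set" where
  "DOPT_II_feasible n x = {mu.
     (\<forall>e \<in> support_edges n x.
        (\<Sum>w \<in> walks (Vn n) (support_edges n x). real (w e) * mu w) \<le> x e)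
     \<and> (\<forall>w \<in> walks (Vn n) (support_edges n x). mu w \<ge> 0)}"

definition DOPT_II :: "nat \<Rightarrow> (nat set \<Rightarrow> real) \<Rightarrow> ereal" where
  "DOPT_II n x = Sup ((\<lambda>mu. ereal (\<Sum>w \<in> walks (Vn n) (support_edges n x). mu w)) ` DOPT_II_feasible n x)"

end

theory Submission
  imports Defs
begin

definition feasR :: "'j set \<Rightarrow> (('j \<Rightarrow> real) \<times> real) set \<Rightarrow> ('j \<Rightarrow> real) \<Rightarrow> bool" where
  "feasR J R z \<longleftrightarrow> (\<forall>r\<in>R. (\<Sum>i\<in>J. fst r i * z i) \<le> snd r)"

definition certR :: "'j set \<Rightarrow> (('j \<Rightarrow> real) \<times> real) set \<Rightarrow> ((('j \<Rightarrow> real) \<times> real) \<Rightarrow> real) \<Rightarrow> bool" where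
  "certR J R u \<longleftrightarrow> (\<forall>r\<in>R. 0 \<le> u r) \<and> (\<forall>i\<in>J. (\<Sum>r\<in>R. u r * fst r i) = 0) \<and> (\<Sum>r\<in>R. u r * snd r) < 0"

definition nncomb :: "(('j \<Rightarrow> real) \<times> real) set \<Rightarrow> (('j \<Rightarrow> real) \<times> real) \<Rightarrow> bool" where
  "nncomb R r' \<longleftrightarrow> (\<exists>c. (\<forall>r\<in>R. 0 \<le> c r) \<and> (\<forall>i. (\<Sum>r\<in>R. c r * fst r i) = fst r' i)
      \<and> (\<Sum>r\<in>R. c r * snd r) = snd r')"

lemma frac_aux: "(a::real) > 0 \<Longrightarrow> b > 0 \<Longrightarrow> a * A \<le> b * B \<Longrightarrow> A / b \<le> B / a"
  by (simp add: field_simps mult.commute)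

lemma sum_ind:
  assumes "finite R" "a \<in> R"
  shows "(\<Sum>r\<in>R. (if r = a then (k::real) else 0) * f r) = k * f a"
proof -
  have "(\<Sum>r\<in>R. (if r = a then (k::real) else 0) * f r) = (\<Sum>r\<in>R. if r = a then k * f r else 0)"
    by (intro sum.cong) auto
  also have "\<dots> = k * f a" using assms by (simp add: sum.delta)
  finally show ?thesis .
qed

lemma lift_comb:
  assumes fR: "finite R" and fR': "finite R'" and nn: "\<forall>r'\<in>R'. nncomb R r'"
    and u'0: "\<forall>r'\<in>R'. 0 \<le> u' r'"
  shows "\<exists>u. (\<forall>r\<in>R. 0 \<le> u r) \<and> (\<forall>i. (\<Sum>r\<in>R. u r * fst r i) = (\<Sum>r'\<in>R'. u' r' * fst r' i))
      \<and> (\<Sum>r\<in>R. u r * snd r) = (\<Sum>r'\<in>R'. u' r' * snd r')"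
proof -
  from nn obtain C where C: "\<And>r'. r' \<in> R' \<Longrightarrow> (\<forall>r\<in>R. 0 \<le> C r' r) \<and> (\<forall>i. (\<Sum>r\<in>R. C r' r * fst r i) = fst r' i)
      \<and> (\<Sum>r\<in>R. C r' r * snd r) = snd r'"
    using bchoice[OF nn[unfolded nncomb_def]] by blast
  define u where "u r = (\<Sum>r'\<in>R'. u' r' * C r' r)" for r
  have "\<forall>r\<in>R. 0 \<le> u r" unfolding u_def using C u'0 by (auto intro!: sum_nonneg)
  moreover have "(\<Sum>r\<in>R. u r * fst r i) = (\<Sum>r'\<in>R'. u' r' * fst r' i)" for i
  proof -
    have "(\<Sum>r\<in>R. u r * fst r i) = (\<Sum>r\<in>R. \<Sum>r'\<in>R'. u' r' * (C r' r * fst r i))"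
      unfolding u_def sum_distrib_right by (simp add: mult.assoc)
    also have "\<dots> = (\<Sum>r'\<in>R'. u' r' * (\<Sum>r\<in>R. C r' r * fst r i))"
      by (subst sum.swap) (simp add: sum_distrib_left)
    also have "\<dots> = (\<Sum>r'\<in>R'. u' r' * fst r' i)" using C by simp
    finally show ?thesis .
  qed
  moreover have "(\<Sum>r\<in>R. u r * snd r) = (\<Sum>r'\<in>R'. u' r' * snd r')"
  proof -
    have "(\<Sum>r\<in>R. u r * snd r) = (\<Sum>r\<in>R. \<Sum>r'\<in>R'. u' r' * (C r' r * snd r))"
      unfolding u_def sum_distrib_right by (simp add: mult.assoc)
    also have "\<dots> = (\<Sum>r'\<in>R'. u' r' * (\<Sum>r\<in>R. C r' r * snd r))"
      by (subst sum.swap) (simp add: sum_distrib_left)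
    also have "\<dots> = (\<Sum>r'\<in>R'. u' r' * snd r')" using C by simp
    finally show ?thesis .
  qed
  ultimately show ?thesis by blast
qed

lemma farkas_set:
  assumes "finite J" "finite R" "\<not> (\<exists>z. feasR J R z)"
  shows "\<exists>u. certR J R u"
  using assms
proof (induction J arbitrary: R rule: finite_induct)
  case empty
  then obtain r where r: "r \<in> R" "snd r < 0" unfolding feasR_def by force
  define u where "u = (\<lambda>r'. if r' = r then (1::real) else 0)"
  have "(\<Sum>r'\<in>R. u r' * snd r') = (\<Sum>r'\<in>R. if r' = r then snd r' else 0)"
    unfolding u_def by (intro sum.cong) auto
  also have "\<dots> = snd r" using r empty.prems by (simp add: sum.delta)
  finally have "(\<Sum>r'\<in>R. u r' * snd r') = snd r" .
  then have "certR {} R u" using r unfolding certR_def by (auto simp: u_def)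
  then show ?case by blast
next
  case (insert j J)
  define P where "P = {r\<in>R. fst r j > 0}"
  define N where "N = {r\<in>R. fst r j < 0}"
  define Z where "Z = {r\<in>R. fst r j = 0}"
  define comb where "comb p q = ((\<lambda>i. (- fst q j) * fst p i + fst p j * fst q i),
      (- fst q j) * snd p + fst p j * snd q)" for p q :: "('a \<Rightarrow> real) \<times> real"
  define R' where "R' = Z \<union> (\<lambda>(p,q). comb p q) ` (P \<times> N)"
  have fin: "finite P" "finite N" "finite Z" using insert.prems(1) unfolding P_def N_def Z_def by auto
  have fR': "finite R'" unfolding R'_def using fin by auto
  have R'j: "\<forall>r'\<in>R'. fst r' j = 0" unfolding R'_def Z_def comb_def by auto
  have nn: "\<forall>r'\<in>R'. nncomb R r'"
  proof
    fix r' assume "r' \<in> R'"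
    then consider "r' \<in> Z" | p q where "p \<in> P" "q \<in> N" "r' = comb p q" unfolding R'_def by auto
    then show "nncomb R r'"
    proof cases
      case 1
      then have rR: "r' \<in> R" unfolding Z_def by auto
      show ?thesis unfolding nncomb_def
        by (rule exI[of _ "\<lambda>r. if r = r' then 1 else 0"])
           (use rR insert.prems(1) in \<open>auto simp: sum_ind[where k=1, simplified]\<close>)
    next
      case 2
      then have pq: "p \<in> R" "q \<in> R" "p \<noteq> q" "fst p j > 0" "fst q j < 0" unfolding P_def N_def by auto
      define c where "c r = (if r = p then - fst q j else 0) + (if r = q then fst p j else 0)" for r
      have s: "(\<Sum>r\<in>R. c r * f r) = (- fst q j) * f p + fst p j * f q" for f :: "_ \<Rightarrow> real"
        unfolding c_def distrib_right sum.distrib sum_ind[OF insert.prems(1) pq(1)]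
          sum_ind[OF insert.prems(1) pq(2)] by simp
      have c1: "\<forall>r\<in>R. 0 \<le> c r" using pq unfolding c_def by auto
      have c2: "\<forall>i. (\<Sum>r\<in>R. c r * fst r i) = fst r' i" unfolding s 2 comb_def by simp
      have c3: "(\<Sum>r\<in>R. c r * snd r) = snd r'" unfolding s 2 comb_def by simp
      show ?thesis unfolding nncomb_def using c1 c2 c3 by blast
    qed
  qed
  have "\<not> (\<exists>z. feasR J R' z)"
  proof
    assume "\<exists>z. feasR J R' z"
    then obtain z where z: "feasR J R' z" by blast
    define s where "s r = (\<Sum>i\<in>J. fst r i * z i)" for r :: "('a \<Rightarrow> real) \<times> real"
    define up where "up p = (snd p - s p) / fst p j" for p
    define lo where "lo q = (snd q - s q) / fst q j" for q
    have lo_up: "lo q \<le> up p" if "p \<in> P" "q \<in> N" for p q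
    proof -
      have pj: "fst p j > 0" and qj: "fst q j < 0" using that unfolding P_def N_def by auto
      have "comb p q \<in> R'" unfolding R'_def using that by auto
      then have "(\<Sum>i\<in>J. fst (comb p q) i * z i) \<le> snd (comb p q)" using z unfolding feasR_def by blast
      moreover have "(\<Sum>i\<in>J. fst (comb p q) i * z i) = (- fst q j) * s p + fst p j * s q"
        unfolding comb_def s_def sum_distrib_left sum.distrib[symmetric] by (intro sum.cong) (auto simp: algebra_simps)
      ultimately have "(- fst q j) * s p + fst p j * s q \<le> (- fst q j) * snd p + fst p j * snd q"
        unfolding comb_def by simp
      then have "fst p j * (s q - snd q) \<le> (- fst q j) * (snd p - s p)" by (simp add: algebra_simps)
      then have "(s q - snd q) / (- fst q j) \<le> (snd p - s p) / fst p j"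
        using pj qj by (intro frac_aux) auto
      moreover have "(snd q - s q) / fst q j = (s q - snd q) / (- fst q j)"
        by (metis minus_diff_eq minus_divide_divide)
      ultimately show ?thesis unfolding lo_def up_def by simp
    qed
    define t where "t = (if P = {} then (if N = {} then 0 else Max (lo ` N)) else Min (up ` P))"
    have tP: "t \<le> up p" if "p \<in> P" for p
    proof -
      have "P \<noteq> {}" using that by auto
      then have "t = Min (up ` P)" unfolding t_def by simp
      then show ?thesis using Min_le[OF finite_imageI[OF fin(1)] imageI[OF that]] by simp
    qed
    have tN: "lo q \<le> t" if "q \<in> N" for q
    proof (cases "P = {}")
      case True
      have "N \<noteq> {}" using that by auto
      then have "t = Max (lo ` N)" using True unfolding t_def by simp
      then show ?thesis using Max_ge[OF finite_imageI[OF fin(2)] imageI[OF that]] by simp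
    next
      case False
      have "lo q \<le> Min (up ` P)" using False that fin(1) lo_up by (subst Min_ge_iff) blast+
      then show ?thesis using False unfolding t_def by simp
    qed
    define z' where "z' = z(j := t)"
    have "feasR (insert j J) R z'"
      unfolding feasR_def
    proof
      fix r assume rR: "r \<in> R"
      have eq: "(\<Sum>i\<in>insert j J. fst r i * z' i) = fst r j * t + s r"
      proof -
        have "(\<Sum>i\<in>insert j J. fst r i * z' i) = fst r j * z' j + (\<Sum>i\<in>J. fst r i * z' i)"
          using insert.hyps by (simp add: sum.insert)
        moreover have "(\<Sum>i\<in>J. fst r i * z' i) = s r"
          unfolding s_def z'_def using insert.hyps by (intro sum.cong) auto
        ultimately show ?thesis unfolding z'_def by simp
      qed
      consider "r \<in> Z" | "r \<in> P" | "r \<in> N" using rR unfolding Z_def P_def N_def by force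
      then show "(\<Sum>i\<in>insert j J. fst r i * z' i) \<le> snd r"
      proof cases
        case 1
        then have "r \<in> R'" unfolding R'_def by auto
        then have "s r \<le> snd r" using z unfolding feasR_def s_def by blast
        then show ?thesis using 1 unfolding eq Z_def by simp
      next
        case 2
        then have pj: "fst r j > 0" unfolding P_def by auto
        have "t \<le> (snd r - s r) / fst r j" using tP[OF 2] unfolding up_def .
        then have "t * fst r j \<le> snd r - s r" using pos_le_divide_eq[OF pj] by blast
        then have "fst r j * t \<le> snd r - s r" by (simp add: mult.commute)
        then show ?thesis unfolding eq by simp
      next
        case 3
        then have qj: "fst r j < 0" unfolding N_def by auto
        have "(snd r - s r) / fst r j \<le> t" using tN[OF 3] unfolding lo_def .
        then have "t * fst r j \<le> snd r - s r" using neg_divide_le_eq[OF qj] by blast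
        then have "fst r j * t \<le> snd r - s r" by (simp add: mult.commute)
        then show ?thesis unfolding eq by simp
      qed
    qed
    then show False using insert.prems(2) by blast
  qed
  from insert.IH[OF fR' this] obtain u' where u': "certR J R' u'" by blast
  from lift_comb[OF insert.prems(1) fR' nn] u' obtain u where
    u: "\<forall>r\<in>R. 0 \<le> u r" "\<forall>i. (\<Sum>r\<in>R. u r * fst r i) = (\<Sum>r'\<in>R'. u' r' * fst r' i)"
      "(\<Sum>r\<in>R. u r * snd r) = (\<Sum>r'\<in>R'. u' r' * snd r')"
    unfolding certR_def by blast
  have "certR (insert j J) R u"
  proof -
    have "\<forall>i\<in>insert j J. (\<Sum>r\<in>R. u r * fst r i) = 0"
    proof
      fix i assume "i \<in> insert j J"
      then show "(\<Sum>r\<in>R. u r * fst r i) = 0"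
      proof
        assume "i = j" then show ?thesis using u(2) R'j by simp
      next
        assume "i \<in> J" then show ?thesis using u(2) u' unfolding certR_def by simp
      qed
    qed
    then show ?thesis using u u' unfolding certR_def by simp
  qed
  then show ?case by blast
qed

lemma fiber_sum:
  assumes "finite I"
  shows "(\<Sum>k\<in>I. F (h k) / real (card {k'\<in>I. h k' = h k})) = (\<Sum>\<rho>\<in>h ` I. (F \<rho> :: real))"
proof -
  have "(\<Sum>k\<in>I. F (h k) / real (card {k'\<in>I. h k' = h k}))
      = (\<Sum>\<rho>\<in>h ` I. \<Sum>k\<in>{k\<in>I. h k = \<rho>}. F (h k) / real (card {k'\<in>I. h k' = h k}))"
    by (rule sum.image_gen[OF assms])
  also have "\<dots> = (\<Sum>\<rho>\<in>h ` I. F \<rho>)"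
  proof (rule sum.cong[OF refl])
    fix \<rho> assume r: "\<rho> \<in> h ` I"
    have "(\<Sum>k\<in>{k\<in>I. h k = \<rho>}. F (h k) / real (card {k'\<in>I. h k' = h k}))
        = (\<Sum>k\<in>{k\<in>I. h k = \<rho>}. F \<rho> / real (card {k'\<in>I. h k' = \<rho>}))"
      by (rule sum.cong) auto
    also have "\<dots> = real (card {k\<in>I. h k = \<rho>}) * (F \<rho> / real (card {k'\<in>I. h k' = \<rho>}))"
      by simp
    also have "\<dots> = F \<rho>"
    proof -
      have "{k\<in>I. h k = \<rho>} \<noteq> {}" using r by auto
      moreover have "finite {k\<in>I. h k = \<rho>}" using assms by auto
      ultimately have "card {k\<in>I. h k = \<rho>} > 0" by (simp add: card_gt_0_iff)
      then show ?thesis by simp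
    qed
    finally show "(\<Sum>k\<in>{k\<in>I. h k = \<rho>}. F (h k) / real (card {k'\<in>I. h k' = h k})) = F \<rho>" .
  qed
  finally show ?thesis .
qed

lemma farkas_idx:
  fixes A :: "'r \<Rightarrow> 'j \<Rightarrow> real" and b :: "'r \<Rightarrow> real"
  assumes fJ: "finite J" and fI: "finite I" and inf: "\<not> (\<exists>z. \<forall>k\<in>I. (\<Sum>i\<in>J. A k i * z i) \<le> b k)"
  shows "\<exists>u. (\<forall>k\<in>I. 0 \<le> u k) \<and> (\<forall>i\<in>J. (\<Sum>k\<in>I. u k * A k i) = 0) \<and> (\<Sum>k\<in>I. u k * b k) < 0"
proof -
  define h where "h k = (A k, b k)" for k
  have "\<not> (\<exists>z. feasR J (h ` I) z)" using inf unfolding feasR_def h_def by auto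
  from farkas_set[OF fJ finite_imageI[OF fI] this] obtain u where u: "certR J (h ` I) u" by blast
  define c where "c k = real (card {k'\<in>I. h k' = h k})" for k
  define v where "v k = u (h k) / c k" for k
  have cpos: "c k > 0" if "k \<in> I" for k
  proof -
    have "{k'\<in>I. h k' = h k} \<noteq> {}" using that by auto
    moreover have "finite {k'\<in>I. h k' = h k}" using fI by auto
    ultimately show ?thesis unfolding c_def by (simp add: card_gt_0_iff)
  qed
  have key: "(\<Sum>k\<in>I. v k * g (h k)) = (\<Sum>\<rho>\<in>h ` I. u \<rho> * g \<rho>)" for g
  proof -
    have "(\<Sum>k\<in>I. v k * g (h k)) = (\<Sum>k\<in>I. u (h k) * g (h k) / real (card {k'\<in>I. h k' = h k}))"
      unfolding v_def c_def by (intro sum.cong) auto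
    also have "\<dots> = (\<Sum>\<rho>\<in>h ` I. u \<rho> * g \<rho>)"
      by (rule fiber_sum[OF fI, of "\<lambda>\<rho>. u \<rho> * g \<rho>"])
    finally show ?thesis .
  qed
  have 1: "\<forall>k\<in>I. 0 \<le> v k" using u cpos unfolding certR_def v_def
    by (auto intro!: divide_nonneg_pos)
  have 2: "\<forall>i\<in>J. (\<Sum>k\<in>I. v k * A k i) = 0"
  proof
    fix i assume i: "i \<in> J"
    have "(\<Sum>k\<in>I. v k * A k i) = (\<Sum>k\<in>I. v k * (\<lambda>\<rho>. fst \<rho> i) (h k))" unfolding h_def by simp
    also have "\<dots> = (\<Sum>\<rho>\<in>h ` I. u \<rho> * fst \<rho> i)" by (rule key)
    also have "\<dots> = 0" using u i unfolding certR_def by blast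
    finally show "(\<Sum>k\<in>I. v k * A k i) = 0" .
  qed
  have 3: "(\<Sum>k\<in>I. v k * b k) < 0"
  proof -
    have "(\<Sum>k\<in>I. v k * b k) = (\<Sum>k\<in>I. v k * snd (h k))" unfolding h_def by simp
    also have "\<dots> = (\<Sum>\<rho>\<in>h ` I. u \<rho> * snd \<rho>)" by (rule key)
    finally show ?thesis using u unfolding certR_def by simp
  qed
  show ?thesis using 1 2 3 by blast
qed

fun ds :: "'a list \<Rightarrow> ('a \<times> 'a) list" where
  "ds (a # b # xs) = (a, b) # ds (b # xs)"
| "ds _ = []"

lemma ds_zip: "ds xs = zip xs (tl xs)"
  by (induction xs rule: ds.induct) auto

lemma ds_append: "ds (xs @ y # ys) = ds (xs @ [y]) @ ds (y # ys)"
proof (induction xs)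
  case Nil then show ?case by simp
next
  case (Cons a xs) then show ?case by (cases xs) auto
qed

lemma ds_rev: "ds (rev xs) = rev (map prod.swap (ds xs))"
proof (induction xs rule: ds.induct)
  case (1 a b xs)
  have "ds (rev (a # b # xs)) = ds (rev xs @ b # [a])" by simp
  also have "\<dots> = ds (rev xs @ [b]) @ ds [b, a]" by (rule ds_append)
  also have "\<dots> = ds (rev (b # xs)) @ [(b, a)]" by simp
  finally show ?case using 1 by simp
next
  case "2_1" then show ?case by simp
next
  case ("2_2" v) then show ?case by simp
qed

lemma ds_join:
  assumes "p \<noteq> []" "q \<noteq> []" "last p = hd q"
  shows "ds (p @ tl q) = ds p @ ds q"
proof -
  obtain p0 v where p: "p = p0 @ [v]" using assms(1) rev_exhaust by blast
  obtain w q0 where q: "q = w # q0" using assms(2) list.exhaust by blast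
  have "v = w" using assms(3) p q by simp
  then show ?thesis unfolding p q using ds_append[of p0 w q0] by simp
qed

definition cnt :: "('a \<times> 'a) list \<Rightarrow> 'a set \<Rightarrow> nat" where
  "cnt L e = length (filter (\<lambda>p. {fst p, snd p} = e) L)"

lemma cnt_append[simp]: "cnt (L @ M) e = cnt L e + cnt M e"
  unfolding cnt_def by simp

lemma cnt_Cons[simp]: "cnt (p # L) e = (if {fst p, snd p} = e then 1 else 0) + cnt L e"
  unfolding cnt_def by simp

lemma cnt_rev_swap[simp]: "cnt (rev (map prod.swap L)) e = cnt L e"
  unfolding cnt_def by (induction L) (auto simp: insert_commute)

lemma walk_vector_cnt: "walk_vector vs e = cnt (ds vs) e"
proof -
  have "cnt (ds vs) e = card {i. i < length (zip vs (tl vs)) \<and>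
      {fst (zip vs (tl vs) ! i), snd (zip vs (tl vs) ! i)} = e}"
    unfolding cnt_def ds_zip by (rule length_filter_conv_card)
  also have "{i. i < length (zip vs (tl vs)) \<and> {fst (zip vs (tl vs) ! i), snd (zip vs (tl vs) ! i)} = e}
      = {i. Suc i < length vs \<and> {vs ! i, vs ! Suc i} = e}"
    by (auto simp: nth_tl)
  finally show ?thesis unfolding walk_vector_def by simp
qed

lemma set_ds: "set (ds vs) = {(vs ! i, vs ! Suc i) | i. Suc i < length vs}"
  unfolding ds_zip set_zip by (auto simp: nth_tl)

definition cw :: "nat set \<Rightarrow> nat set set \<Rightarrow> nat list \<Rightarrow> bool" where
  "cw V E vs \<longleftrightarrow> vs \<noteq> [] \<and> hd vs = last vs \<and> set vs = V \<and>
     (\<forall>p\<in>set (ds vs). {fst p, snd p} \<in> E \<and> fst p \<noteq> snd p)"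

lemma ccw_cw: "closed_covering_walk V E vs = cw V E vs"
  unfolding closed_covering_walk_def cw_def set_ds by auto

lemma split1:
  assumes "length (filter ((=) (a, b)) (ds xs)) \<ge> Suc k"
  shows "\<exists>A C. xs = A @ a # b # C \<and> length (filter ((=) (a, b)) (ds (b # C))) \<ge> k"
  using assms
proof (induction xs rule: ds.induct)
  case (1 a' b' xs)
  show ?case
  proof (cases "(a', b') = (a, b)")
    case True
    then show ?thesis using 1(2) by (intro exI[of _ "[]"] exI[of _ xs]) auto
  next
    case False
    then have "length (filter ((=) (a, b)) (ds (b' # xs))) \<ge> Suc k" using 1(2) by auto
    from 1(1)[OF this] obtain A C where "b' # xs = A @ a # b # C"
      "length (filter ((=) (a, b)) (ds (b # C))) \<ge> k" by blast
    then show ?thesis by (intro exI[of _ "a' # A"] exI[of _ C]) auto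
  qed
qed auto

lemma split2:
  assumes "length (filter ((=) (a, b)) (ds xs)) \<ge> 2" "a \<noteq> b"
  shows "\<exists>A B C. xs = A @ a # b # B @ a # b # C"
proof -
  from split1[where k=1 and a=a and b=b and xs=xs] assms(1) obtain A C1 where
    1: "xs = A @ a # b # C1" "length (filter ((=) (a, b)) (ds (b # C1))) \<ge> 1" by auto
  from split1[where k=0 and a=a and b=b and xs="b # C1"] 1(2) obtain A2 C where 2: "b # C1 = A2 @ a # b # C" by auto
  then obtain B where "A2 = b # B" using assms(2) by (cases A2) auto
  then show ?thesis using 1 2 by auto
qed

lemma cnt_dir:
  assumes "a \<noteq> b"
  shows "cnt L {a, b} = length (filter ((=) (a, b)) L) + length (filter ((=) (b, a)) L)"
  unfolding cnt_def using assms by (induction L) (auto simp: doubleton_eq_iff)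

lemma reduce_step:
  assumes cw: "cw V E vs" and big: "cnt (ds vs) e \<ge> 3"
  shows "\<exists>vs'. cw V E vs' \<and> length vs' < length vs \<and> (\<forall>e. cnt (ds vs') e \<le> cnt (ds vs) e)"
proof -
  have "cnt (ds vs) e \<noteq> 0" using big by simp
  then obtain p where p: "p \<in> set (ds vs)" "{fst p, snd p} = e"
    unfolding cnt_def by (metis (mono_tags, lifting) filter_False length_0_conv)
  then have pd: "fst p \<noteq> snd p" using cw unfolding cw_def by blast
  obtain a b where ab: "a \<noteq> b" "{a, b} = e" "length (filter ((=) (a, b)) (ds vs)) \<ge> 2"
  proof (cases "length (filter ((=) (fst p, snd p)) (ds vs)) \<ge> 2")
    case True then show ?thesis using that pd p by blast
  next
    case False
    then have "length (filter ((=) (snd p, fst p)) (ds vs)) \<ge> 2"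
      using cnt_dir[OF pd, of "ds vs"] big p by simp
    then show ?thesis using that pd p by (metis insert_commute)
  qed
  from split2[OF ab(3) ab(1)] obtain A B C where vs: "vs = A @ a # b # B @ a # b # C" by blast
  define vs' where "vs' = A @ a # rev B @ b # C"
  have ds_old: "ds vs = ds (A @ [a]) @ (a, b) # ds (b # B @ [a]) @ (a, b) # ds (b # C)"
  proof -
    have "ds vs = ds (A @ [a]) @ ds (a # b # B @ a # b # C)" unfolding vs by (rule ds_append)
    moreover have "ds (b # B @ a # b # C) = ds (b # B @ [a]) @ ds (a # b # C)"
      using ds_append[of "b # B" a "b # C"] by simp
    ultimately show ?thesis by simp
  qed
  have ds_new: "ds vs' = ds (A @ [a]) @ rev (map prod.swap (ds (b # B @ [a]))) @ ds (b # C)"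
  proof -
    have "ds vs' = ds (A @ [a]) @ ds (a # rev B @ b # C)" unfolding vs'_def by (rule ds_append)
    moreover have "ds (a # rev B @ b # C) = ds (a # rev B @ [b]) @ ds (b # C)"
      using ds_append[of "a # rev B" b C] by simp
    moreover have "a # rev B @ [b] = rev (b # B @ [a])" by simp
    ultimately show ?thesis by (simp only: ds_rev)
  qed
  have "cw V E vs'"
  proof -
    have "vs' \<noteq> []" unfolding vs'_def by simp
    moreover have "hd vs' = hd vs" unfolding vs'_def vs by (cases A) auto
    moreover have "last vs' = last vs" unfolding vs'_def vs by (cases C) auto
    moreover have "set vs' = set vs" unfolding vs'_def vs by auto
    moreover have sub: "set (ds vs') \<subseteq> set (ds vs) \<union> prod.swap ` set (ds vs)"
      unfolding ds_new ds_old by auto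
    moreover have "\<forall>p\<in>set (ds vs'). {fst p, snd p} \<in> E \<and> fst p \<noteq> snd p"
    proof
      fix p assume "p \<in> set (ds vs')"
      then have "p \<in> set (ds vs) \<or> prod.swap p \<in> set (ds vs)" using sub by force
      then show "{fst p, snd p} \<in> E \<and> fst p \<noteq> snd p" using cw unfolding cw_def
        by (cases p) (auto simp: insert_commute)
    qed
    ultimately show ?thesis using cw unfolding cw_def by simp
  qed
  moreover have "length vs' < length vs" unfolding vs'_def vs by simp
  moreover have "\<forall>e. cnt (ds vs') e \<le> cnt (ds vs) e"
    unfolding ds_new ds_old by simp
  ultimately show ?thesis by blast
qed

lemma reduce_walk:
  assumes "cw V E vs"
  shows "\<exists>vs'. cw V E vs' \<and> (\<forall>e. cnt (ds vs') e \<le> cnt (ds vs) e) \<and> (\<forall>e. cnt (ds vs') e \<le> 2)"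
  using assms
proof (induction "length vs" arbitrary: vs rule: less_induct)
  case less
  show ?case
  proof (cases "\<forall>e. cnt (ds vs) e \<le> 2")
    case True then show ?thesis using less.prems by blast
  next
    case False
    then obtain e where "\<not> cnt (ds vs) e \<le> 2" by blast
    then have "cnt (ds vs) e \<ge> 3" by simp
    from reduce_step[OF less.prems this] obtain vs1 where
      1: "cw V E vs1" "length vs1 < length vs" "\<forall>e. cnt (ds vs1) e \<le> cnt (ds vs) e" by blast
    from less.hyps[OF 1(2) 1(1)] obtain vs' where
      "cw V E vs'" "\<forall>e. cnt (ds vs') e \<le> cnt (ds vs1) e" "\<forall>e. cnt (ds vs') e \<le> 2" by blast
    then show ?thesis using 1(3) by (meson le_trans)
  qed
qed

lemma sum_cnt:
  assumes "finite E" "\<forall>p\<in>set L. {fst p, snd p} \<in> E"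
  shows "(\<Sum>e\<in>E. real (cnt L e) * f e) = sum_list (map (\<lambda>p. f {fst p, snd p}) L)"
  using assms(2)
proof (induction L)
  case Nil then show ?case by (simp add: cnt_def)
next
  case (Cons p L)
  have "(\<Sum>e\<in>E. real (cnt (p # L) e) * f e)
      = (\<Sum>e\<in>E. (if e = {fst p, snd p} then 1 else 0) * f e + real (cnt L e) * f e)"
    by (intro sum.cong) (auto simp: distrib_right)
  also have "\<dots> = (\<Sum>e\<in>E. (if e = {fst p, snd p} then 1 else 0) * f e) + (\<Sum>e\<in>E. real (cnt L e) * f e)"
    by (rule sum.distrib)
  also have "(\<Sum>e\<in>E. (if e = {fst p, snd p} then 1 else 0) * f e) = f {fst p, snd p}"
    using sum_ind[OF assms(1), of "{fst p, snd p}" 1 f] Cons.prems by simp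
  finally show ?case using Cons by simp
qed

definition gp :: "nat \<Rightarrow> nat set set \<Rightarrow> nat list \<Rightarrow> bool" where
  "gp n E p \<longleftrightarrow> p \<noteq> [] \<and> set p \<subseteq> {..<n} \<and> (\<forall>q\<in>set (ds p). {fst q, snd q} \<in> E)"

definition plen :: "(nat set \<Rightarrow> real) \<Rightarrow> nat list \<Rightarrow> real" where
  "plen y p = sum_list (map (\<lambda>q. y {fst q, snd q}) (ds p))"

definition PS :: "nat \<Rightarrow> nat set set \<Rightarrow> (nat set \<Rightarrow> real) \<Rightarrow> nat \<Rightarrow> nat \<Rightarrow> real set" where
  "PS n E y u v = insert 1 {plen y p | p. gp n E p \<and> hd p = u \<and> last p = v}"

definition gdist :: "nat \<Rightarrow> nat set set \<Rightarrow> (nat set \<Rightarrow> real) \<Rightarrow> nat \<Rightarrow> nat \<Rightarrow> real" where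
  "gdist n E y u v = Inf (PS n E y u v)"

lemma plen_nn:
  assumes "\<forall>e\<in>E. 0 \<le> y e" "gp n E p"
  shows "0 \<le> plen y p"
proof (unfold plen_def, rule sum_list_nonneg)
  fix x assume "x \<in> set (map (\<lambda>q. y {fst q, snd q}) (ds p))"
  then obtain q where "q \<in> set (ds p)" "x = y {fst q, snd q}" by auto
  then show "0 \<le> x" using assms unfolding gp_def by auto
qed

lemma PS_nn:
  assumes "\<forall>e\<in>E. 0 \<le> y e" "a \<in> PS n E y u v"
  shows "0 \<le> a"
proof -
  from assms(2) consider "a = 1" | p where "gp n E p" "a = plen y p" unfolding PS_def by auto
  then show ?thesis
  proof cases
    case 1 then show ?thesis by simp
  next
    case 2 then show ?thesis using plen_nn[OF assms(1) 2(1)] by simp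
  qed
qed

lemma PS_bdd: "\<forall>e\<in>E. 0 \<le> y e \<Longrightarrow> bdd_below (PS n E y u v)"
  by (rule bdd_belowI[of _ 0]) (rule PS_nn)

lemma gdist_nn: assumes "\<forall>e\<in>E. 0 \<le> y e" shows "0 \<le> gdist n E y u v"
  unfolding gdist_def
proof (rule cInf_greatest)
  show "PS n E y u v \<noteq> {}" unfolding PS_def by simp
  show "\<And>a. a \<in> PS n E y u v \<Longrightarrow> 0 \<le> a" by (rule PS_nn[OF assms])
qed

lemma gdist_le1: assumes "\<forall>e\<in>E. 0 \<le> y e" shows "gdist n E y u v \<le> 1"
  unfolding gdist_def
proof (rule cInf_lower)
  show "1 \<in> PS n E y u v" unfolding PS_def by simp
  show "bdd_below (PS n E y u v)" by (rule PS_bdd) fact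
qed

lemma gdist_le_path:
  assumes "\<forall>e\<in>E. 0 \<le> y e" "gp n E p"
  shows "gdist n E y (hd p) (last p) \<le> plen y p"
  unfolding gdist_def
proof (rule cInf_lower)
  show "plen y p \<in> PS n E y (hd p) (last p)" using assms unfolding PS_def by auto
  show "bdd_below (PS n E y (hd p) (last p))" by (rule PS_bdd[OF assms(1)])
qed

lemma gdist_edge:
  assumes "\<forall>e\<in>E. 0 \<le> y e" "{u, v} \<in> E" "u < n" "v < n"
  shows "gdist n E y u v \<le> y {u, v}"
proof -
  have "gp n E [u, v]" unfolding gp_def using assms by auto
  from gdist_le_path[OF assms(1) this] show ?thesis by (simp add: plen_def)
qed

lemma gp_rev: "gp n E p \<Longrightarrow> gp n E (rev p)"
  unfolding gp_def ds_rev by (auto simp: insert_commute)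

lemma plen_rev: "plen y (rev p) = plen y p"
proof -
  have "plen y (rev p) = sum_list (rev (map (\<lambda>q. y {snd q, fst q}) (ds p)))"
    unfolding plen_def ds_rev by (simp add: rev_map comp_def)
  also have "\<dots> = plen y p" unfolding plen_def sum_list_rev by (simp add: insert_commute)
  finally show ?thesis .
qed

lemma gdist_sym: "gdist n E y u v = gdist n E y v u"
proof -
  have "PS n E y u v \<subseteq> PS n E y v u" for u v
  proof
    fix a assume "a \<in> PS n E y u v"
    then consider "a = 1" | p where "gp n E p" "hd p = u" "last p = v" "a = plen y p"
      unfolding PS_def by auto
    then show "a \<in> PS n E y v u"
    proof cases
      case 1 then show ?thesis unfolding PS_def by simp
    next
      case 2
      then have "gp n E (rev p)" "hd (rev p) = v" "last (rev p) = u" "a = plen y (rev p)"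
        using gp_rev plen_rev by (auto simp: hd_rev last_rev gp_def)
      then show ?thesis unfolding PS_def by blast
    qed
  qed
  then have "PS n E y u v = PS n E y v u" by blast
  then show ?thesis unfolding gdist_def by simp
qed

lemma gp_join:
  assumes "gp n E p" "gp n E q" "last p = hd q"
  shows "gp n E (p @ tl q)" "hd (p @ tl q) = hd p" "last (p @ tl q) = last q"
    "plen y (p @ tl q) = plen y p + plen y q"
proof -
  have ne: "p \<noteq> []" "q \<noteq> []" using assms unfolding gp_def by auto
  have d: "ds (p @ tl q) = ds p @ ds q" by (rule ds_join[OF ne assms(3)])
  have "set (tl q) \<subseteq> set q" using ne by (cases q) auto
  then show "gp n E (p @ tl q)" using assms ne unfolding gp_def d by auto
  show "hd (p @ tl q) = hd p" using ne by simp
  show "last (p @ tl q) = last q" using ne assms(3) by (cases q) (auto simp: last_append)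
  show "plen y (p @ tl q) = plen y p + plen y q" unfolding plen_def d by simp
qed

lemma Inf_add_le:
  fixes S T :: "real set"
  assumes "S \<noteq> {}" "T \<noteq> {}" "bdd_below S" "bdd_below T" "\<forall>a\<in>S. \<forall>b\<in>T. c \<le> a + b"
  shows "c \<le> Inf S + Inf T"
proof -
  have "c - a \<le> Inf T" if "a \<in> S" for a
    by (rule cInf_greatest[OF assms(2)]) (use assms(5) that in force)
  then have "c - Inf T \<le> Inf S"
    by (intro cInf_greatest[OF assms(1)]) force
  then show ?thesis by simp
qed

lemma gdist_tri:
  assumes ynn: "\<forall>e\<in>E. 0 \<le> y e"
  shows "gdist n E y u w \<le> gdist n E y u v + gdist n E y v w"
  unfolding gdist_def
proof (rule Inf_add_le)
  show "PS n E y u v \<noteq> {}" "PS n E y v w \<noteq> {}" unfolding PS_def by auto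
  show "bdd_below (PS n E y u v)" "bdd_below (PS n E y v w)" using PS_bdd[OF ynn] by auto
  show "\<forall>a\<in>PS n E y u v. \<forall>b\<in>PS n E y v w. Inf (PS n E y u w) \<le> a + b"
  proof (intro ballI)
    fix a b assume a: "a \<in> PS n E y u v" and b: "b \<in> PS n E y v w"
    have a0: "0 \<le> a" and b0: "0 \<le> b" using PS_nn[OF ynn] a b by auto
    have le1: "Inf (PS n E y u w) \<le> 1" using gdist_le1[OF ynn] unfolding gdist_def by blast
    show "Inf (PS n E y u w) \<le> a + b"
    proof (cases "a = 1 \<or> b = 1")
      case True then show ?thesis using le1 a0 b0 by auto
    next
      case False
      then obtain p q where p: "gp n E p" "hd p = u" "last p = v" "a = plen y p"
        and q: "gp n E q" "hd q = v" "last q = w" "b = plen y q"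
        using a b unfolding PS_def by auto
      have j: "gp n E (p @ tl q)" "hd (p @ tl q) = u" "last (p @ tl q) = w"
        "plen y (p @ tl q) = a + b"
        using gp_join[OF p(1) q(1)] p q by auto
      show ?thesis using gdist_le_path[OF ynn j(1)] j unfolding gdist_def by simp
    qed
  qed
qed

lemma gdist_approx:
  assumes ynn: "\<forall>e\<in>E. 0 \<le> y e" and lt: "gdist n E y u v + \<delta> < 1" and d: "\<delta> > 0"
  shows "\<exists>p. gp n E p \<and> hd p = u \<and> last p = v \<and> plen y p < gdist n E y u v + \<delta>"
proof -
  have "Inf (PS n E y u v) < gdist n E y u v + \<delta>" using d unfolding gdist_def by simp
  then obtain a where a: "a \<in> PS n E y u v" "a < gdist n E y u v + \<delta>"
    using cInf_lessD[of "PS n E y u v"] unfolding PS_def by blast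
  then have "a \<noteq> 1" using lt by auto
  then show ?thesis using a unfolding PS_def by auto
qed

lemma mem_le_sum_list:
  fixes xs :: "real list"
  shows "x \<in> set xs \<Longrightarrow> (\<forall>y\<in>set xs. 0 \<le> y) \<Longrightarrow> x \<le> sum_list xs"
proof (induction xs)
  case (Cons a xs)
  show ?case
  proof (cases "x = a")
    case True
    have "0 \<le> sum_list xs" using Cons.prems by (intro sum_list_nonneg) auto
    then show ?thesis using True by simp
  next
    case False
    then have "x \<le> sum_list xs" using Cons by auto
    then show ?thesis using Cons.prems by simp
  qed
qed simp

lemma sum_list_add_const:
  fixes c :: real
  shows "sum_list (map (\<lambda>q. g q + c) xs) = sum_list (map g xs) + real (length xs) * c"
  by (induction xs) (auto simp: algebra_simps)

lemma En_doubleton: "{a, b} \<in> En n \<Longrightarrow> a \<noteq> b \<and> a < n \<and> b < n"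
  unfolding En_def by (auto simp: doubleton_eq_iff)

lemma finite_En: "finite (En n)"
proof -
  have "En n \<subseteq> Pow {..<n}" unfolding En_def by auto
  then show ?thesis by (rule finite_subset) simp
qed

lemma cnt_zero: "(\<forall>p\<in>set L. {fst p, snd p} \<noteq> e) \<Longrightarrow> cnt L e = 0"
  unfolding cnt_def by (simp add: filter_empty_conv)

lemma walks_zero:
  assumes "w \<in> walks V E" "e \<notin> E"
  shows "w e = 0"
proof -
  from assms(1) obtain vs where "cw V E vs" "w = walk_vector vs"
    unfolding walks_def ccw_cw by blast
  then have "\<forall>p\<in>set (ds vs). {fst p, snd p} \<noteq> e" using assms(2) unfolding cw_def by auto
  then have "cnt (ds vs) e = 0" by (rule cnt_zero)
  then show ?thesis using \<open>w = walk_vector vs\<close> unfolding walk_vector_cnt by simp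
qed

lemma walks_mono: "E \<subseteq> E' \<Longrightarrow> walks V E \<subseteq> walks V E'"
  unfolding walks_def ccw_cw cw_def by blast

lemma finite_walks:
  assumes "E \<subseteq> En n"
  shows "finite (walks V E)"
proof -
  have "walks V E \<subseteq> {w. \<forall>e. (e \<in> En n \<longrightarrow> w e \<in> {..2}) \<and> (e \<notin> En n \<longrightarrow> w e = 0)}"
  proof
    fix w assume w: "w \<in> walks V E"
    then have "\<forall>e. w e \<le> 2" unfolding walks_def by blast
    moreover have "\<forall>e. e \<notin> En n \<longrightarrow> w e = 0" using walks_zero[OF w] assms by blast
    ultimately show "w \<in> {w. \<forall>e. (e \<in> En n \<longrightarrow> w e \<in> {..2}) \<and> (e \<notin> En n \<longrightarrow> w e = 0)}" by auto
  qed
  moreover have "finite {w. \<forall>e. (e \<in> En n \<longrightarrow> w e \<in> {..2::nat}) \<and> (e \<notin> En n \<longrightarrow> w e = 0)}"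
    by (rule finite_set_of_finite_funs) (auto simp: finite_En)
  ultimately show ?thesis by (rule finite_subset)
qed

lemma concat_paths:
  assumes "vs \<noteq> []" "set vs \<subseteq> {..<n}"
    "\<forall>q\<in>set (ds vs). \<exists>p. gp n E p \<and> hd p = fst q \<and> last p = snd q \<and> plen y p \<le> g q"
  shows "\<exists>P. gp n E P \<and> hd P = hd vs \<and> last P = last vs \<and> set vs \<subseteq> set P \<and>
     plen y P \<le> sum_list (map g (ds vs))"
  using assms
proof (induction vs rule: ds.induct)
  case (1 a b xs)
  from 1(1) 1(3,4) obtain P' where P': "gp n E P'" "hd P' = b" "last P' = last (b # xs)"
    "set (b # xs) \<subseteq> set P'" "plen y P' \<le> sum_list (map g (ds (b # xs)))" by auto
  from 1(4) obtain p where p: "gp n E p" "hd p = a" "last p = b" "plen y p \<le> g (a, b)" by auto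
  have j: "gp n E (p @ tl P')" "hd (p @ tl P') = hd p" "last (p @ tl P') = last P'"
    "plen y (p @ tl P') = plen y p + plen y P'"
    using gp_join[OF p(1) P'(1)] p(3) P'(2) by auto
  have pne: "p \<noteq> []" and P'ne: "P' \<noteq> []" using p(1) P'(1) unfolding gp_def by auto
  have "a \<in> set p" using p(2) pne by auto
  moreover have "set P' \<subseteq> insert b (set (tl P'))" using P'(2) P'ne by (cases P') auto
  moreover have "b \<in> set p" using p(3) pne by auto
  ultimately have "set (a # b # xs) \<subseteq> set (p @ tl P')" using P'(4) by auto
  then show ?case using j p P' by (intro exI[of _ "p @ tl P'"]) auto
next
  case ("2_2" v)
  have "gp n E [v]" using "2_2" unfolding gp_def by auto
  then show ?case by (intro exI[of _ "[v]"]) (auto simp: plen_def)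
qed simp

lemma walk_dist_ge1:
  assumes ynn: "\<forall>e\<in>E. 0 \<le> y e" and EEn: "E \<subseteq> En n" and fE: "finite E"
    and dual: "\<forall>w\<in>walks (Vn n) E. 1 \<le> (\<Sum>e\<in>E. real (w e) * y e)"
    and cwK: "cw (Vn n) (En n) vs"
  shows "1 \<le> sum_list (map (\<lambda>q. gdist n E y (fst q) (snd q)) (ds vs))"
proof (rule ccontr)
  define S where "S = sum_list (map (\<lambda>q. gdist n E y (fst q) (snd q)) (ds vs))"
  assume "\<not> 1 \<le> sum_list (map (\<lambda>q. gdist n E y (fst q) (snd q)) (ds vs))"
  then have S1: "S < 1" unfolding S_def by simp
  define k where "k = length (ds vs)"
  define \<delta> where "\<delta> = (1 - S) / (real k + 2)"
  have dpos: "\<delta> > 0" unfolding \<delta>_def using S1 by simp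
  have "S * real k \<le> real k" using mult_right_mono[of S 1 "real k"] S1 by simp
  then have dlt: "\<delta> < 1 - S" unfolding \<delta>_def using S1 by (simp add: field_simps)
  have kd: "real k * \<delta> < 1 - S"
  proof -
    have "real k * \<delta> = (1 - S) * (real k / (real k + 2))" unfolding \<delta>_def by (simp add: field_simps)
    also have "\<dots> < (1 - S) * 1" using S1 by (intro mult_strict_left_mono) (auto simp: field_simps)
    finally show ?thesis by simp
  qed
  have vsV: "set vs = {..<n}" using cwK unfolding cw_def Vn_def by simp
  show False
  proof (cases "\<exists>q\<in>set (ds vs). 1 \<le> gdist n E y (fst q) (snd q) + \<delta>")
    case True
    then obtain q where q: "q \<in> set (ds vs)" "1 \<le> gdist n E y (fst q) (snd q) + \<delta>" by blast
    have "gdist n E y (fst q) (snd q) \<le> S" unfolding S_def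
      by (rule mem_le_sum_list) (use q(1) gdist_nn[OF ynn] in auto)
    then show False using q(2) dlt by simp
  next
    case False
    have "\<forall>q\<in>set (ds vs). \<exists>p. gp n E p \<and> hd p = fst q \<and> last p = snd q \<and>
        plen y p \<le> gdist n E y (fst q) (snd q) + \<delta>"
    proof
      fix q assume "q \<in> set (ds vs)"
      then have "gdist n E y (fst q) (snd q) + \<delta> < 1" using False by auto
      from gdist_approx[OF ynn this dpos] show "\<exists>p. gp n E p \<and> hd p = fst q \<and> last p = snd q \<and>
        plen y p \<le> gdist n E y (fst q) (snd q) + \<delta>" by force
    qed
    from concat_paths[OF _ _ this] cwK vsV obtain P where
      P: "gp n E P" "hd P = hd vs" "last P = last vs" "set vs \<subseteq> set P"
        "plen y P \<le> sum_list (map (\<lambda>q. gdist n E y (fst q) (snd q) + \<delta>) (ds vs))"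
      unfolding cw_def by auto
    have "plen y P \<le> S + real k * \<delta>" using P(5) unfolding S_def k_def sum_list_add_const .
    then have Plt: "plen y P < 1" using kd by simp
    have Pedges: "\<forall>p\<in>set (ds P). {fst p, snd p} \<in> E" using P(1) unfolding gp_def by blast
    have cwP: "cw (Vn n) E P"
    proof -
      have "set P = Vn n" using P(1,4) vsV unfolding gp_def Vn_def by auto
      moreover have "\<forall>p\<in>set (ds P). {fst p, snd p} \<in> E \<and> fst p \<noteq> snd p"
        using Pedges EEn En_doubleton by blast
      ultimately show ?thesis using P cwK unfolding cw_def gp_def by auto
    qed
    from reduce_walk[OF cwP] obtain P2 where P2: "cw (Vn n) E P2"
      "\<forall>e. cnt (ds P2) e \<le> cnt (ds P) e" "\<forall>e. cnt (ds P2) e \<le> 2" by blast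
    have "walk_vector P2 \<in> walks (Vn n) E"
      unfolding walks_def ccw_cw walk_vector_cnt using P2(1,3) by blast
    then have "1 \<le> (\<Sum>e\<in>E. real (walk_vector P2 e) * y e)" using dual by blast
    also have "\<dots> \<le> (\<Sum>e\<in>E. real (walk_vector P e) * y e)"
      unfolding walk_vector_cnt using P2(2) ynn by (intro sum_mono mult_right_mono) auto
    also have "\<dots> = plen y P"
      unfolding walk_vector_cnt plen_def by (rule sum_cnt[OF fE Pedges])
    finally show False using Plt by simp
  qed
qed

definition OP :: "nat \<Rightarrow> (nat \<times> nat) set" where
  "OP n = {(i, j). i < n \<and> j < n \<and> i \<noteq> j}"

definition TR :: "nat \<Rightarrow> ((nat \<times> nat) \<times> nat) set" where
  "TR n = {((i, j), k). i < n \<and> j < n \<and> k < n \<and> i \<noteq> j \<and> i \<noteq> k \<and> j \<noteq> k}"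

lemma finite_OP: "finite (OP n)"
proof -
  have "OP n \<subseteq> {..<n} \<times> {..<n}" unfolding OP_def by auto
  then show ?thesis by (rule finite_subset) simp
qed

lemma TR_Sigma: "TR n = Sigma (OP n) (\<lambda>p. Vn n - {fst p, snd p})"
  unfolding TR_def OP_def Vn_def by auto

lemma finite_TR: "finite (TR n)"
  unfolding TR_Sigma using finite_OP by (auto simp: Vn_def)

lemma sum_OP: "(\<Sum>p\<in>OP n. g {fst p, snd p}) = 2 * (\<Sum>e\<in>En n. (g e :: real))"
proof -
  have img: "(\<lambda>p. {fst p, snd p}) ` OP n = En n"
  proof
    show "(\<lambda>p. {fst p, snd p}) ` OP n \<subseteq> En n"
    proof
      fix e assume "e \<in> (\<lambda>p. {fst p, snd p}) ` OP n"
      then obtain a b where "(a, b) \<in> OP n" "e = {a, b}" by auto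
      then show "e \<in> En n" unfolding OP_def En_def by auto
    qed
    show "En n \<subseteq> (\<lambda>p. {fst p, snd p}) ` OP n"
    proof
      fix e assume "e \<in> En n"
      then obtain i j where "e = {i, j}" "i < n" "j < n" "i \<noteq> j" unfolding En_def by auto
      then have "(i, j) \<in> OP n" "e = {fst (i, j), snd (i, j)}" unfolding OP_def by auto
      then show "e \<in> (\<lambda>p. {fst p, snd p}) ` OP n" by blast
    qed
  qed
  have "(\<Sum>p\<in>OP n. g {fst p, snd p})
      = (\<Sum>e\<in>(\<lambda>p. {fst p, snd p}) ` OP n. \<Sum>p\<in>{p\<in>OP n. {fst p, snd p} = e}. g {fst p, snd p})"
    by (rule sum.image_gen[OF finite_OP])
  also have "\<dots> = (\<Sum>e\<in>En n. 2 * g e)"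
    unfolding img
  proof (rule sum.cong[OF refl])
    fix e assume "e \<in> En n"
    then obtain i j where e: "e = {i, j}" "i < n" "j < n" "i \<noteq> j" unfolding En_def by auto
    have fib: "{p\<in>OP n. {fst p, snd p} = e} = {(i, j), (j, i)}"
    proof (rule set_eqI)
      fix p :: "nat \<times> nat"
      obtain a b where p: "p = (a, b)" by (cases p)
      have "({a, b} = {i, j}) = ((a = i \<and> b = j) \<or> (a = j \<and> b = i))" by (rule doubleton_eq_iff)
      then show "p \<in> {p\<in>OP n. {fst p, snd p} = e} \<longleftrightarrow> p \<in> {(i, j), (j, i)}"
        unfolding p e(1) OP_def using e(2-4) by auto
    qed
    have "(\<Sum>p\<in>{p\<in>OP n. {fst p, snd p} = e}. g {fst p, snd p}) = (\<Sum>p\<in>{(i, j), (j, i)}. g e)"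
      unfolding fib
    proof (rule sum.cong[OF refl])
      fix p assume "p \<in> {(i, j), (j, i)}"
      then have "{fst p, snd p} = e" unfolding e(1) by (auto simp: insert_commute)
      then show "g {fst p, snd p} = g e" by simp
    qed
    also have "\<dots> = 2 * g e" using e(4) by simp
    finally show "(\<Sum>p\<in>{p\<in>OP n. {fst p, snd p} = e}. g {fst p, snd p}) = 2 * g e" .
  qed
  also have "\<dots> = 2 * (\<Sum>e\<in>En n. g e)" by (simp add: sum_distrib_left)
  finally show ?thesis .
qed

lemma TR_mem: "t \<in> TR n \<longleftrightarrow> fst (fst t) < n \<and> snd (fst t) < n \<and> snd t < n \<and>
    fst (fst t) \<noteq> snd (fst t) \<and> fst (fst t) \<noteq> snd t \<and> snd (fst t) \<noteq> snd t"
  unfolding TR_def by (cases t) auto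

lemma triple:
  fixes lam :: "nat set \<Rightarrow> nat \<Rightarrow> real" and D :: "nat set \<Rightarrow> real"
  assumes lam0: "\<forall>e\<in>En n. \<forall>k\<in>Vn n - e. 0 \<le> lam e k"
    and tri: "\<And>i j k. i < n \<Longrightarrow> j < n \<Longrightarrow> k < n \<Longrightarrow> D {i, j} \<le> D {i, k} + D {k, j}"
  shows "0 \<le> (\<Sum>p\<in>OP n. D {fst p, snd p} * (\<Sum>k\<in>Vn n - {fst p, snd p}.
            - lam {fst p, snd p} k + lam {fst p, k} (snd p) + lam {snd p, k} (fst p)))"
proof -
  define F1 where "F1 t = D {fst (fst t), snd (fst t)} * lam {fst (fst t), snd (fst t)} (snd t)" for t :: "(nat \<times> nat) \<times> nat"
  define F2 where "F2 t = D {fst (fst t), snd (fst t)} * lam {fst (fst t), snd t} (snd (fst t))" for t :: "(nat \<times> nat) \<times> nat"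
  define F3 where "F3 t = D {fst (fst t), snd (fst t)} * lam {snd (fst t), snd t} (fst (fst t))" for t :: "(nat \<times> nat) \<times> nat"
  define G where "G t = D {fst (fst t), snd t} * lam {fst (fst t), snd (fst t)} (snd t)" for t :: "(nat \<times> nat) \<times> nat"
  define H where "H t = D {snd (fst t), snd t} * lam {fst (fst t), snd (fst t)} (snd t)" for t :: "(nat \<times> nat) \<times> nat"
  define s2 where "s2 t = ((fst (fst t), snd t), snd (fst t))" for t :: "(nat \<times> nat) \<times> nat"
  define s3 where "s3 t = ((snd t, fst (fst t)), snd (fst t))" for t :: "(nat \<times> nat) \<times> nat"
  define s3' where "s3' t = ((snd (fst t), snd t), fst (fst t))" for t :: "(nat \<times> nat) \<times> nat"
  define s4 where "s4 t = ((snd (fst t), fst (fst t)), snd t)" for t :: "(nat \<times> nat) \<times> nat"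
  have "(\<Sum>p\<in>OP n. D {fst p, snd p} * (\<Sum>k\<in>Vn n - {fst p, snd p}.
            - lam {fst p, snd p} k + lam {fst p, k} (snd p) + lam {snd p, k} (fst p)))
      = (\<Sum>p\<in>OP n. \<Sum>k\<in>Vn n - {fst p, snd p}. (- F1 (p, k) + F2 (p, k) + F3 (p, k)))"
    unfolding sum_distrib_left
    by (intro sum.cong refl) (simp add: F1_def F2_def F3_def algebra_simps)
  also have "\<dots> = (\<Sum>t\<in>TR n. - F1 t + F2 t + F3 t)"
    unfolding TR_Sigma by (subst sum.Sigma) (auto simp: finite_OP Vn_def split_def)
  also have "\<dots> = - (\<Sum>t\<in>TR n. F1 t) + (\<Sum>t\<in>TR n. F2 t) + (\<Sum>t\<in>TR n. F3 t)"
    by (simp add: sum.distrib sum_subtractf sum_negf)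
  also have "(\<Sum>t\<in>TR n. F2 t) = (\<Sum>t\<in>TR n. G t)"
    by (rule sum.reindex_bij_witness[where i=s2 and j=s2])
       (auto simp: TR_mem F2_def G_def s2_def)
  also have "(\<Sum>t\<in>TR n. F3 t) = (\<Sum>t\<in>TR n. G t)"
    by (rule sum.reindex_bij_witness[where j=s3' and i=s3])
       (auto simp: TR_mem F3_def G_def s3_def s3'_def insert_commute)
  also have "- (\<Sum>t\<in>TR n. F1 t) + (\<Sum>t\<in>TR n. G t) + (\<Sum>t\<in>TR n. G t)
      = - (\<Sum>t\<in>TR n. F1 t) + (\<Sum>t\<in>TR n. G t) + (\<Sum>t\<in>TR n. H t)"
  proof -
    have "(\<Sum>t\<in>TR n. G t) = (\<Sum>t\<in>TR n. H t)"
      by (rule sum.reindex_bij_witness[where i=s4 and j=s4])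
         (auto simp: TR_mem G_def H_def s4_def insert_commute)
    then show ?thesis by simp
  qed
  also have "\<dots> = (\<Sum>t\<in>TR n. - F1 t + G t + H t)"
    by (simp add: sum.distrib sum_subtractf sum_negf)
  also have "0 \<le> \<dots>"
  proof (rule sum_nonneg)
    fix t assume t: "t \<in> TR n"
    obtain i j k where t': "t = ((i, j), k)" by (metis prod.collapse)
    have c: "i < n" "j < n" "k < n" "i \<noteq> j" "i \<noteq> k" "j \<noteq> k" using t unfolding t' TR_mem by auto
    have "{i, j} \<in> En n" unfolding En_def using c by auto
    moreover have "k \<in> Vn n - {i, j}" unfolding Vn_def using c by auto
    ultimately have l0: "0 \<le> lam {i, j} k" using lam0 by blast
    have "D {i, j} \<le> D {i, k} + D {j, k}" using tri[OF c(1,2,3)] by (simp add: insert_commute)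
    then have "0 \<le> lam {i, j} k * (D {i, k} + D {j, k} - D {i, j})" using l0 by simp
    then show "0 \<le> - F1 t + G t + H t" unfolding t' F1_def G_def H_def by (simp add: algebra_simps)
  qed
  finally show ?thesis .
qed

lemma sum_ind2:
  assumes "finite R" "a \<in> R"
  shows "(\<Sum>r\<in>R. (if a = r then (k::real) else 0) * f r) = k * f a"
  using sum_ind[OF assms, of k f] by (simp add: eq_commute)

lemma sum_I3:
  assumes "finite E" "finite W"
  shows "(\<Sum>k\<in>Inl ` E \<union> Inr ` Some ` W \<union> {Inr None}. f k)
       = (\<Sum>e\<in>E. f (Inl e)) + (\<Sum>w\<in>W. f (Inr (Some w))) + (f (Inr None) :: real)"
proof -
  have d1: "Inl ` E \<inter> (Inr ` Some ` W \<union> {Inr None}) = {}" by auto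
  have d2: "Inr None \<notin> Inr ` Some ` W" by auto
  have "(\<Sum>k\<in>Inl ` E \<union> Inr ` Some ` W \<union> {Inr None}. f k)
      = (\<Sum>k\<in>Inl ` E. f k) + (\<Sum>k\<in>Inr ` Some ` W \<union> {Inr None}. f k)"
    unfolding Un_assoc using assms d1 by (intro sum.union_disjoint) auto
  also have "(\<Sum>k\<in>Inr ` Some ` W \<union> {Inr None}. f k) = (\<Sum>k\<in>Inr ` Some ` W. f k) + f (Inr None)"
    using sum.insert[OF finite_imageI[OF finite_imageI[OF assms(2)]] d2, of f] by (simp add: add.commute)
  also have "(\<Sum>k\<in>Inl ` E. f k) = (\<Sum>e\<in>E. f (Inl e))" by (simp add: sum.reindex)
  also have "(\<Sum>k\<in>Inr ` Some ` W. f k) = (\<Sum>w\<in>W. f (Inr (Some w)))"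
  proof -
    have "Inr ` Some ` W = (\<lambda>w. Inr (Some w)) ` W" by auto
    moreover have "inj_on (\<lambda>w. Inr (Some w)) W" by (auto simp: inj_on_def)
    ultimately show ?thesis by (simp add: sum.reindex)
  qed
  finally show ?thesis by simp
qed

definition DD :: "nat \<Rightarrow> nat set set \<Rightarrow> (nat set \<Rightarrow> real) \<Rightarrow> nat set \<Rightarrow> real" where
  "DD n E y e = gdist n E y (Min e) (Max e)"

lemma DD_pair: "DD n E y {u, v} = gdist n E y u v"
proof (cases "u \<le> v")
  case True then show ?thesis unfolding DD_def by (simp add: min_def max_def)
next
  case False then show ?thesis unfolding DD_def by (simp add: min_def max_def gdist_sym)
qed

lemma part_B_core:
  fixes n :: nat and x :: "nat set \<Rightarrow> real" and E :: "nat set set" and y :: "nat set \<Rightarrow> real"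
    and lam :: "nat set \<Rightarrow> nat \<Rightarrow> real" and mu :: "(nat set \<Rightarrow> nat) \<Rightarrow> real"
  assumes EEn: "E \<subseteq> En n" and fE: "finite E"
    and xnn: "\<forall>e\<in>En n. 0 \<le> x e" and xnotE: "\<forall>e\<in>En n - E. x e = 0"
    and ynn: "\<forall>e\<in>E. 0 \<le> y e"
    and dual: "\<forall>w\<in>walks (Vn n) E. 1 \<le> (\<Sum>e\<in>E. real (w e) * y e)"
    and feas: "(lam, mu) \<in> DOPT_I_feasible n x"
  shows "(\<Sum>w\<in>walks (Vn n) (En n). mu w) \<le> (\<Sum>e\<in>E. y e * x e)"
proof -
  define WK where "WK = walks (Vn n) (En n)"
  define D where "D = DD n E y"
  have fWK: "finite WK" unfolding WK_def by (rule finite_walks[of "En n" n]) simp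
  have cons: "\<And>i j. i < n \<Longrightarrow> j < n \<Longrightarrow> i \<noteq> j \<Longrightarrow>
        (\<Sum>k\<in>Vn n - {i, j}. - lam {i, j} k + lam {i, k} j + lam {j, k} i)
        + (\<Sum>w\<in>WK. real (w {i, j}) * mu w) \<le> x {i, j}"
    using feas unfolding DOPT_I_feasible_def WK_def by auto
  have lam0: "\<forall>e\<in>En n. \<forall>k\<in>Vn n - e. 0 \<le> lam e k" using feas unfolding DOPT_I_feasible_def by auto
  have mu0: "\<forall>w\<in>WK. 0 \<le> mu w" using feas unfolding DOPT_I_feasible_def WK_def by auto
  have Dpair: "D {u, v} = gdist n E y u v" for u v unfolding D_def by (rule DD_pair)
  have D0: "0 \<le> D e" for e unfolding D_def DD_def by (rule gdist_nn[OF ynn])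
  have Dtri: "D {i, j} \<le> D {i, k} + D {k, j}" for i j k
    unfolding Dpair by (rule gdist_tri[OF ynn])
  have walkD: "1 \<le> (\<Sum>e\<in>En n. real (w e) * D e)" if w: "w \<in> WK" for w
  proof -
    from w obtain vs where vs: "cw (Vn n) (En n) vs" "w = walk_vector vs"
      unfolding WK_def walks_def ccw_cw by blast
    have edges: "\<forall>p\<in>set (ds vs). {fst p, snd p} \<in> En n" using vs(1) unfolding cw_def by blast
    have "(\<Sum>e\<in>En n. real (w e) * D e) = sum_list (map (\<lambda>p. D {fst p, snd p}) (ds vs))"
      unfolding vs(2) walk_vector_cnt by (rule sum_cnt[OF finite_En edges])
    also have "\<dots> = sum_list (map (\<lambda>q. gdist n E y (fst q) (snd q)) (ds vs))"
      unfolding Dpair ..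
    finally show ?thesis using walk_dist_ge1[OF ynn EEn fE dual vs(1)] by simp
  qed
  define L where "L e = (\<Sum>w\<in>WK. real (w e) * mu w)" for e
  have "(\<Sum>w\<in>WK. mu w) \<le> (\<Sum>w\<in>WK. mu w * (\<Sum>e\<in>En n. real (w e) * D e))"
  proof (rule sum_mono)
    fix w assume "w \<in> WK"
    then show "mu w \<le> mu w * (\<Sum>e\<in>En n. real (w e) * D e)"
      using walkD mu0 mult_left_mono[of 1 _ "mu w"] by auto
  qed
  also have "\<dots> = (\<Sum>w\<in>WK. \<Sum>e\<in>En n. mu w * (real (w e) * D e))"
    by (simp add: sum_distrib_left)
  also have "\<dots> = (\<Sum>e\<in>En n. \<Sum>w\<in>WK. mu w * (real (w e) * D e))"
    by (rule sum.swap)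
  also have "\<dots> = (\<Sum>e\<in>En n. D e * L e)"
    unfolding L_def sum_distrib_left by (intro sum.cong refl) (simp add: mult_ac)
  also have "\<dots> \<le> (\<Sum>e\<in>En n. D e * x e)"
  proof -
    define c where "c p = (\<Sum>k\<in>Vn n - {fst p, snd p}.
            - lam {fst p, snd p} k + lam {fst p, k} (snd p) + lam {snd p, k} (fst p))" for p
    have "(\<Sum>p\<in>OP n. D {fst p, snd p} * L {fst p, snd p})
        \<le> (\<Sum>p\<in>OP n. D {fst p, snd p} * x {fst p, snd p} - D {fst p, snd p} * c p)"
    proof (rule sum_mono)
      fix p assume "p \<in> OP n"
      then have "fst p < n" "snd p < n" "fst p \<noteq> snd p" unfolding OP_def by auto
      from cons[OF this] have "L {fst p, snd p} \<le> x {fst p, snd p} - c p"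
        unfolding L_def c_def by simp
      from mult_left_mono[OF this D0[of "{fst p, snd p}"]] show "D {fst p, snd p} * L {fst p, snd p}
          \<le> D {fst p, snd p} * x {fst p, snd p} - D {fst p, snd p} * c p"
        by (simp add: algebra_simps)
    qed
    also have "\<dots> = (\<Sum>p\<in>OP n. D {fst p, snd p} * x {fst p, snd p}) - (\<Sum>p\<in>OP n. D {fst p, snd p} * c p)"
      by (rule sum_subtractf)
    also have "\<dots> \<le> (\<Sum>p\<in>OP n. D {fst p, snd p} * x {fst p, snd p})"
    proof -
      have "0 \<le> (\<Sum>p\<in>OP n. D {fst p, snd p} * c p)"
        unfolding c_def by (rule triple[where D=D, OF lam0 Dtri])
      then show ?thesis by simp
    qed
    finally have "(\<Sum>p\<in>OP n. D {fst p, snd p} * L {fst p, snd p})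
        \<le> (\<Sum>p\<in>OP n. D {fst p, snd p} * x {fst p, snd p})" .
    then have "2 * (\<Sum>e\<in>En n. D e * L e) \<le> 2 * (\<Sum>e\<in>En n. D e * x e)"
      using sum_OP[of "\<lambda>e. D e * L e" n] sum_OP[of "\<lambda>e. D e * x e" n] by simp
    then show ?thesis by simp
  qed
  also have "\<dots> \<le> (\<Sum>e\<in>E. y e * x e)"
  proof -
    have "(\<Sum>e\<in>En n. D e * x e) = (\<Sum>e\<in>E. D e * x e) + (\<Sum>e\<in>En n - E. D e * x e)"
      using sum.subset_diff[OF EEn finite_En, of "\<lambda>e. D e * x e"] by (simp add: add.commute)
    also have "(\<Sum>e\<in>En n - E. D e * x e) = 0" using xnotE by simp
    also have "(\<Sum>e\<in>E. D e * x e) \<le> (\<Sum>e\<in>E. y e * x e)"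
    proof (rule sum_mono)
      fix e assume e: "e \<in> E"
      then have "e \<in> En n" using EEn by auto
      then obtain u v where uv: "e = {u, v}" "u < n" "v < n" unfolding En_def by auto
      have "D e \<le> y e" unfolding uv Dpair using gdist_edge[OF ynn _ uv(2,3)] e uv(1) by simp
      then show "D e * x e \<le> y e * x e" using xnn \<open>e \<in> En n\<close> by (simp add: mult_right_mono)
    qed
    finally show ?thesis by simp
  qed
  finally show ?thesis unfolding WK_def .
qed

theorem mainTheorem8:
  fixes n :: nat and x :: "nat set \<Rightarrow> real"
  assumes "is_vertex x (P_SEP n)"
  shows "DOPT_I n x = DOPT_II n x"
proof -
  have xP: "x \<in> P_SEP n" using assms unfolding is_vertex_def by blast
  have xnn: "\<forall>e\<in>En n. 0 \<le> x e" using xP unfolding P_SEP_def by auto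
  define E where "E = support_edges n x"
  have EEn: "E \<subseteq> En n" unfolding E_def support_edges_def by auto
  have fE: "finite E" using finite_subset[OF EEn finite_En] .
  have xE: "\<forall>e\<in>E. 0 < x e" unfolding E_def support_edges_def by auto
  have xnotE: "\<forall>e\<in>En n - E. x e = 0" using xnn unfolding E_def support_edges_def by force
  define W where "W = walks (Vn n) E"
  define WK where "WK = walks (Vn n) (En n)"
  have fW: "finite W" unfolding W_def by (rule finite_walks[OF EEn])
  have fWK: "finite WK" unfolding WK_def by (rule finite_walks[of "En n" n]) simp
  have WWK: "W \<subseteq> WK" unfolding W_def WK_def by (rule walks_mono[OF EEn])
  have A: "DOPT_II n x \<le> DOPT_I n x"
    unfolding DOPT_II_def DOPT_I_def
  proof (rule Sup_mono)
    fix a assume "a \<in> (\<lambda>mu. ereal (\<Sum>w\<in>walks (Vn n) (support_edges n x). mu w)) ` DOPT_II_feasible n x"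
    then obtain mu where mu: "mu \<in> DOPT_II_feasible n x" "a = ereal (\<Sum>w\<in>W. mu w)"
      unfolding W_def E_def by blast
    have muc: "\<forall>e\<in>E. (\<Sum>w\<in>W. real (w e) * mu w) \<le> x e" "\<forall>w\<in>W. 0 \<le> mu w"
      using mu(1) unfolding DOPT_II_feasible_def W_def E_def by auto
    define mu' where "mu' w = (if w \<in> W then mu w else 0)" for w
    define lam0 where "lam0 = (\<lambda>(e::nat set) (k::nat). (0::real))"
    have sumW: "(\<Sum>w\<in>WK. f w * mu' w) = (\<Sum>w\<in>W. f w * mu w)" for f :: "_ \<Rightarrow> real"
    proof -
      have "(\<Sum>w\<in>WK. f w * mu' w) = (\<Sum>w\<in>WK. if w \<in> W then f w * mu w else 0)"
        unfolding mu'_def by (intro sum.cong) auto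
      also have "\<dots> = (\<Sum>w\<in>WK \<inter> W. f w * mu w)" by (rule sum.inter_restrict[OF fWK, symmetric])
      also have "WK \<inter> W = W" using WWK by auto
      finally show ?thesis .
    qed
    have "(lam0, mu') \<in> DOPT_I_feasible n x"
      unfolding DOPT_I_feasible_def
    proof (clarify, intro conjI allI impI ballI)
      fix i j assume ij: "i < n \<and> j < n \<and> i \<noteq> j"
      have ijE: "{i, j} \<in> En n" unfolding En_def using ij by auto
      have "(\<Sum>w\<in>walks (Vn n) (En n). real (w {i, j}) * mu' w) \<le> x {i, j}"
      proof (cases "{i, j} \<in> E")
        case True
        then show ?thesis using sumW[of "\<lambda>w. real (w {i, j})"] muc(1) unfolding WK_def by simp
      next
        case False
        have "(\<Sum>w\<in>W. real (w {i, j}) * mu w) = 0"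
          using walks_zero[OF _ False] unfolding W_def by (intro sum.neutral) simp
        then show ?thesis using sumW[of "\<lambda>w. real (w {i, j})"] xnn ijE unfolding WK_def by simp
      qed
      then show "(\<Sum>k\<in>Vn n - {i, j}. - lam0 {i, j} k + lam0 {i, k} j + lam0 {j, k} i) +
          (\<Sum>w\<in>walks (Vn n) (En n). real (w {i, j}) * mu' w) \<le> x {i, j}"
        unfolding lam0_def by simp
    next
      fix e k show "0 \<le> lam0 e k" unfolding lam0_def by simp
    next
      fix w show "0 \<le> mu' w" unfolding mu'_def using muc(2) by simp
    qed
    moreover have "a = ereal (\<Sum>w\<in>walks (Vn n) (En n). mu' w)"
      using mu(2) sumW[of "\<lambda>_. 1"] unfolding WK_def by simp
    ultimately show "\<exists>b\<in>(\<lambda>(lam, mu). ereal (\<Sum>w\<in>walks (Vn n) (En n). mu w)) ` DOPT_I_feasible n x. a \<le> b"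
      by force
  qed
  have II0: "0 \<le> DOPT_II n x"
  proof -
    have "(\<lambda>_. 0) \<in> DOPT_II_feasible n x"
      unfolding DOPT_II_feasible_def support_edges_def by auto
    then have "ereal (\<Sum>w\<in>walks (Vn n) (support_edges n x). (\<lambda>_. 0) w) \<le> DOPT_II n x"
      unfolding DOPT_II_def by (intro Sup_upper) (rule imageI)
    then show ?thesis by (simp add: zero_ereal_def)
  qed
  have IIup: "ereal (\<Sum>w\<in>W. z w) \<le> DOPT_II n x" if "z \<in> DOPT_II_feasible n x" for z
    unfolding DOPT_II_def W_def E_def using that by (intro Sup_upper) (rule imageI)
  have B: "DOPT_I n x \<le> DOPT_II n x"
    unfolding DOPT_I_def
  proof (rule Sup_least)
    fix a assume "a \<in> (\<lambda>(lam, mu). ereal (\<Sum>w\<in>walks (Vn n) (En n). mu w)) ` DOPT_I_feasible n x"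
    then obtain lam mu where lm: "(lam, mu) \<in> DOPT_I_feasible n x" "a = ereal (\<Sum>w\<in>WK. mu w)"
      unfolding WK_def by auto
    define s where "s = (\<Sum>w\<in>WK. mu w)"
    show "a \<le> DOPT_II n x"
    proof (rule ccontr)
      assume "\<not> a \<le> DOPT_II n x"
      then have lt: "DOPT_II n x < ereal s" using lm(2) unfolding s_def by simp
      obtain r where r: "DOPT_II n x = ereal r" using II0 lt by (cases "DOPT_II n x") auto
      have rs: "r < s" using lt r by simp
      define \<epsilon> where "\<epsilon> = (s - r) / 2"
      have eps: "\<epsilon> > 0" "r + \<epsilon> < s" unfolding \<epsilon>_def using rs by (auto simp: field_simps)
      define I where "I = Inl ` E \<union> Inr ` Some ` W \<union> {Inr None}"
      define Am where "Am k w = (case k of Inl e \<Rightarrow> real (w e)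
           | Inr (Some w') \<Rightarrow> (if w' = w then -1 else 0) | Inr None \<Rightarrow> -1)"
        for k :: "nat set + (nat set \<Rightarrow> nat) option" and w :: "nat set \<Rightarrow> nat"
      define bv where "bv k = (case k of Inl e \<Rightarrow> x e | Inr (Some w') \<Rightarrow> 0 | Inr None \<Rightarrow> - (r + \<epsilon>))"
        for k :: "nat set + (nat set \<Rightarrow> nat) option"
      have fI: "finite I" unfolding I_def using fE fW by auto
      have inf: "\<not> (\<exists>z. \<forall>k\<in>I. (\<Sum>i\<in>W. Am k i * z i) \<le> bv k)"
      proof
        assume "\<exists>z. \<forall>k\<in>I. (\<Sum>i\<in>W. Am k i * z i) \<le> bv k"
        then obtain z where z: "\<forall>k\<in>I. (\<Sum>i\<in>W. Am k i * z i) \<le> bv k" by blast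
        have z1: "(\<Sum>w\<in>W. real (w e) * z w) \<le> x e" if "e \<in> E" for e
          using z[rule_format, of "Inl e"] that unfolding I_def Am_def bv_def by simp
        have z2: "0 \<le> z w" if "w \<in> W" for w
        proof -
          have "(\<Sum>i\<in>W. Am (Inr (Some w)) i * z i) \<le> 0"
            using z[rule_format, of "Inr (Some w)"] that unfolding I_def bv_def by simp
          moreover have "(\<Sum>i\<in>W. Am (Inr (Some w)) i * z i) = - z w"
            unfolding Am_def using sum_ind2[OF fW that, of "-1" z] by simp
          ultimately show ?thesis by simp
        qed
        have z3: "r + \<epsilon> \<le> (\<Sum>w\<in>W. z w)"
        proof -
          have "(\<Sum>i\<in>W. Am (Inr None) i * z i) \<le> - (r + \<epsilon>)"
            using z[rule_format, of "Inr None"] unfolding I_def bv_def by simp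
          moreover have "(\<Sum>i\<in>W. Am (Inr None) i * z i) = - (\<Sum>w\<in>W. z w)"
            unfolding Am_def by (simp add: sum_negf)
          ultimately show ?thesis by simp
        qed
        have "z \<in> DOPT_II_feasible n x"
          unfolding DOPT_II_feasible_def using z1 z2 unfolding W_def E_def by auto
        from IIup[OF this] r have "(\<Sum>w\<in>W. z w) \<le> r" by simp
        then show False using z3 eps by simp
      qed
      from farkas_idx[OF fW fI inf] obtain u where
        u: "\<forall>k\<in>I. 0 \<le> u k" "\<forall>i\<in>W. (\<Sum>k\<in>I. u k * Am k i) = 0" "(\<Sum>k\<in>I. u k * bv k) < 0"
        by blast
      define c where "c = u (Inr None)"
      have c0: "0 \<le> c" unfolding c_def using u(1) unfolding I_def by auto
      have ue0: "\<forall>e\<in>E. 0 \<le> u (Inl e)" using u(1) unfolding I_def by auto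
      have v0: "\<forall>w\<in>W. 0 \<le> u (Inr (Some w))" using u(1) unfolding I_def by auto
      have colw: "(\<Sum>e\<in>E. u (Inl e) * real (w e)) = u (Inr (Some w)) + c" if w: "w \<in> W" for w
      proof -
        have "(\<Sum>k\<in>I. u k * Am k w) = (\<Sum>e\<in>E. u (Inl e) * real (w e))
            + (\<Sum>w'\<in>W. u (Inr (Some w')) * (if w' = w then -1 else 0)) - c"
          unfolding I_def sum_I3[OF fE fW] Am_def c_def by simp
        also have "(\<Sum>w'\<in>W. u (Inr (Some w')) * (if w' = w then -1 else 0)) = - u (Inr (Some w))"
          using sum_ind[OF fW w, of "-1" "\<lambda>w'. u (Inr (Some w'))"] by (simp add: mult.commute)
        finally have "(\<Sum>k\<in>I. u k * Am k w) = (\<Sum>e\<in>E. u (Inl e) * real (w e)) - u (Inr (Some w)) - c"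
          by simp
        then show ?thesis using u(2) w by simp
      qed
      have rowb: "(\<Sum>e\<in>E. u (Inl e) * x e) - c * (r + \<epsilon>) < 0"
      proof -
        have "(\<Sum>k\<in>I. u k * bv k) = (\<Sum>e\<in>E. u (Inl e) * x e) - c * (r + \<epsilon>)"
          unfolding I_def sum_I3[OF fE fW] bv_def c_def by (simp add: algebra_simps)
        then show ?thesis using u(3) by simp
      qed
      have ux0: "0 \<le> (\<Sum>e\<in>E. u (Inl e) * x e)"
        using ue0 xE by (intro sum_nonneg) (simp add: less_imp_le)
      have cpos: "c > 0"
      proof (rule ccontr)
        assume "\<not> c > 0"
        then have "c = 0" using c0 by simp
        then show False using rowb ux0 by simp
      qed
      define y where "y e = u (Inl e) / c" for e
      have ynn: "\<forall>e\<in>E. 0 \<le> y e" unfolding y_def using ue0 cpos by simp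
      have dual: "\<forall>w\<in>walks (Vn n) E. 1 \<le> (\<Sum>e\<in>E. real (w e) * y e)"
      proof
        fix w assume "w \<in> walks (Vn n) E"
        then have w: "w \<in> W" unfolding W_def .
        have "(\<Sum>e\<in>E. real (w e) * y e) = (\<Sum>e\<in>E. u (Inl e) * real (w e)) / c"
          unfolding y_def sum_divide_distrib by (intro sum.cong) auto
        also have "\<dots> = (u (Inr (Some w)) + c) / c" using colw[OF w] by simp
        also have "\<dots> \<ge> 1" using v0 w cpos by (simp add: field_simps)
        finally show "1 \<le> (\<Sum>e\<in>E. real (w e) * y e)" .
      qed
      have yx: "(\<Sum>e\<in>E. y e * x e) < r + \<epsilon>"
      proof -
        have "(\<Sum>e\<in>E. y e * x e) = (\<Sum>e\<in>E. u (Inl e) * x e) / c"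
          unfolding y_def sum_divide_distrib by (intro sum.cong) auto
        also have "\<dots> < r + \<epsilon>" using rowb cpos by (simp add: divide_less_eq mult.commute)
        finally show ?thesis .
      qed
      have "s \<le> (\<Sum>e\<in>E. y e * x e)"
        unfolding s_def WK_def
        by (rule part_B_core[OF EEn fE xnn xnotE ynn dual lm(1)])
      then show False using yx eps by simp
    qed
  qed
  from A B show ?thesis by simp
qed

end
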